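(* Let $m\ge1$, $N\ge1$ and let $i$ be an integer with $0\le i\le mN$. For all integers $b_1,\dots,b_N\in\{0,\dots,m\}$ with $\sum_{j=1}^N b_j=i$, $$\sum_{j=1}^N 2^{-b_j}\;\ge\;\Big(N-i+\lfloor i/N\rfloor N\Big)2^{-\lfloor i/N\rfloor}+\Big(i-\lfloor i/N\rfloor N\Big)2^{-\lceil i/N\rceil},$$ where the right-hand side is the value of $\sum_j 2^{-b_j}$ for the pattern in which $N-i+\lfloor i/N\rfloor N$ symbols contain $\lfloor i/N\rfloor$ erased bits and $i-\lfloor i/N\rfloor N$ symbols contain $\lceil i/N\rceil$ erased bits. Consequently, under the proportional multiplicity assignment, among all patterns of $i$ erased bits this evenly spread pattern is the worst case for the ASD decoding condition $\eta\ge K-1$, where $\eta=\sum_j 2^{-b_j}$.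
   Context: Setting: a Reed–Solomon code of length $N$ and dimension $K$ over $GF(2^m)$ whose symbols are sent as $m$ bits each over a binary erasure channel; $b_j$ is the number of erased bits in the $j$-th received symbol. Under the proportional multiplicity assignment (each of the $2^{b_j}$ candidates of symbol $j$ gets multiplicity $M2^{-b_j}$, $M>0$), the score is $S=M\eta$ and the cost is $C=\frac12M^2\eta$, and the ASD sufficient condition $S\ge\sqrt{2(K-1)C}$ is equivalent to $\eta\ge K-1$. *)

theory Defs
  imports Complex_Main
begin

end

theory Submission
  imports Defs
begin

lemma pw: "(2::real) powi (- int n) = 1 / 2^n"
  by (simp add: power_int_minus divide_inverse)

lemma key:
  fixes b q :: nat
  shows "(2::real) powi (- int b) \<ge> (2::real) powi (- int q) - (real b - real q) * (2::real) powi (- int q) / 2"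
proof (cases "q \<le> b")
  case True
  then obtain t where bt: "b = q + t" using le_Suc_ex by blast
  have e: "(2::real) powi (- int b) = (2::real) powi (- int q) / 2^t"
    by (simp only: pw bt power_add) (simp add: field_simps)
  have p: "(2::real) powi (- int q) > 0" by simp
  have "1 / (2::real)^t \<ge> 1 - real t / 2"
  proof (cases "t \<le> 1")
    case True then have "t = 0 \<or> t = 1" by auto
    then show ?thesis by auto
  next
    case False then show ?thesis by (simp add: order_trans[of _ 0])
  qed
  then have "(2::real) powi (- int q) * (1 / 2^t) \<ge> (2::real) powi (- int q) * (1 - real t / 2)"
    using p by (intro mult_left_mono) auto
  moreover have rb: "real b - real q = real t" using bt by simp
  ultimately show ?thesis unfolding e rb by (simp add: algebra_simps)
next
  case False
  then obtain t where bt: "q = b + t" and t: "t \<ge> 1"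
    by (metis le_add1 le_add_diff_inverse less_one not_le not_less_iff_gr_or_eq zero_less_diff)
  have e: "(2::real) powi (- int b) = (2::real) powi (- int q) * 2^t"
    by (simp only: pw bt power_add) (simp add: field_simps)
  have p: "(2::real) powi (- int q) > 0" by simp
  have "real t + 1 \<le> (2::real)^t"
  proof (induction t)
    case 0 then show ?case by simp
  next
    case (Suc n) then show ?case by simp
  qed
  then have "(2::real)^t \<ge> 1 + real t / 2" by simp
  then have "(2::real) powi (- int q) * 2^t \<ge> (2::real) powi (- int q) * (1 + real t / 2)"
    using p by (intro mult_left_mono) auto
  moreover have rb: "real b - real q = - real t" using bt by simp
  ultimately show ?thesis unfolding e rb by (simp add: algebra_simps)
qed

theorem lemma4:
  fixes m N i :: nat and b :: "nat \<Rightarrow> nat"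
  assumes "m \<ge> 1" and "N \<ge> 1" and "i \<le> m * N"
    and "\<forall>j\<in>{1..N}. b j \<le> m"
    and "(\<Sum>j=1..N. b j) = i"
  shows "(\<Sum>j=1..N. (2::real) powi (- int (b j)))
     \<ge> (real N - real i + real_of_int \<lfloor>real i / real N\<rfloor> * real N)
          * (2::real) powi (- \<lfloor>real i / real N\<rfloor>)
       + (real i - real_of_int \<lfloor>real i / real N\<rfloor> * real N)
          * (2::real) powi (- \<lceil>real i / real N\<rceil>)"
proof -
  define q where "q = i div N"
  define r where "r = i mod N"
  have fl: "\<lfloor>real i / real N\<rfloor> = int q" unfolding q_def
    by (metis floor_divide_of_nat_eq of_int_of_nat_eq)
  have iq: "i = q * N + r" unfolding q_def r_def by simp
  have P: "(2::real) powi (- int q) > 0" by simp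
  have rhs: "(real N - real i + real_of_int \<lfloor>real i / real N\<rfloor> * real N)
          * (2::real) powi (- \<lfloor>real i / real N\<rfloor>)
       + (real i - real_of_int \<lfloor>real i / real N\<rfloor> * real N)
          * (2::real) powi (- \<lceil>real i / real N\<rceil>)
     = real N * (2::real) powi (- int q) - real r * (2::real) powi (- int q) / 2"
  proof (cases "r = 0")
    case True
    then show ?thesis using fl iq by simp
  next
    case False
    have "real i / real N = real q + real r / real N"
      using iq assms(2) by (simp add: field_simps)
    moreover have "real r / real N < 1" "real r / real N > 0"
      using False assms(2) r_def by (auto simp: field_simps)
    ultimately have "\<lceil>real i / real N\<rceil> = int q + 1"
      by (simp add: ceiling_eq_iff)
    moreover have "(2::real) powi (- (int q + 1)) = (2::real) powi (- int q) / 2"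
      by (simp add: power_int_diff)
    ultimately show ?thesis using fl iq by (simp add: field_simps)
  qed
  have "(\<Sum>j=1..N. (2::real) powi (- int (b j))) \<ge>
        (\<Sum>j=1..N. (2::real) powi (- int q) - (real (b j) - real q) * (2::real) powi (- int q) / 2)"
    by (rule sum_mono) (rule key)
  also have "(\<Sum>j=1..N. (2::real) powi (- int q) - (real (b j) - real q) * (2::real) powi (- int q) / 2)
     = real N * (2::real) powi (- int q) - (real i - real N * real q) * (2::real) powi (- int q) / 2"
  proof -
    have "(\<Sum>j=1..N. real (b j)) = real i" using assms(5) by (metis of_nat_sum)
    then show ?thesis
      by (simp add: sum_subtractf sum_divide_distrib[symmetric] sum_distrib_right[symmetric] left_diff_distrib)
  qed
  also have "\<dots> = real N * (2::real) powi (- int q) - real r * (2::real) powi (- int q) / 2"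
    using iq by (simp add: algebra_simps)
  finally show ?thesis using rhs by simp
qed

end
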